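(* Let $\mathcal{F}$ be a codimension-$1$ foliation on a complex manifold $X$, let $x\in X$ be a point with dimensional type $t=\tau(\mathcal{F},x)$, and let $E$ be a normal crossings divisor of $X$ through $x$ with each component tangent to $\mathcal{F}$. Then $E$ has at most $t$ components through $x$.
   Context: $\mathcal{F}$ is given locally by a holomorphic $1$-form $\omega$ with coprime coefficients and $\omega\wedge d\omega=0$. The dimensional type $\tau(\mathcal{F},x)$ is the codimension in $T_xX$ of $\{\mathcal{X}(x)\mid\mathcal{X}$ a germ of holomorphic vector field at $x$ with $\omega(\mathcal{X})=0\}$. A component being tangent to $\mathcal{F}$ means it is an invariant hypersurface of $\mathcal{F}$. *)

theory Defs
  imports "HOL-Analysis.Analysis"
begin

text \<open>Local setting: a neighbourhood of the point x in the n-dimensional complex manifold X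
is identified (via a chart) with an open subset of complex^'n.\<close>

definition hol_on :: "(complex^'n) set \<Rightarrow> (complex^'n \<Rightarrow> complex) \<Rightarrow> bool" where
  "hol_on U f \<longleftrightarrow> open U \<and>
     (\<forall>z\<in>U. \<exists>c::complex^'n. (f has_derivative (\<lambda>h. \<Sum>j\<in>UNIV. c $ j * h $ j)) (at z))"

definition hol_germ :: "complex^'n \<Rightarrow> (complex^'n \<Rightarrow> complex) \<Rightarrow> bool" where
  "hol_germ x f \<longleftrightarrow> (\<exists>U. x \<in> U \<and> hol_on U f)"

definition germ_dvd :: "complex^'n \<Rightarrow> (complex^'n \<Rightarrow> complex) \<Rightarrow> (complex^'n \<Rightarrow> complex) \<Rightarrow> bool" where
  "germ_dvd x g f \<longleftrightarrow> (\<exists>c. hol_germ x c \<and> (\<forall>\<^sub>F z in nhds x. f z = c z * g z))"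

definition coprime_germs :: "complex^'n \<Rightarrow> ('n \<Rightarrow> complex^'n \<Rightarrow> complex) \<Rightarrow> bool" where
  "coprime_germs x \<omega> \<longleftrightarrow>
     (\<forall>g. hol_germ x g \<and> (\<forall>i. germ_dvd x g (\<omega> i)) \<longrightarrow> g x \<noteq> 0)"

definition cpd :: "(complex^'n \<Rightarrow> complex) \<Rightarrow> 'n \<Rightarrow> complex^'n \<Rightarrow> complex" where
  "cpd f j z = frechet_derivative f (at z) (axis j 1)"

text \<open>omega wedge d omega = 0 near x (all coefficients of the 3-form vanish)\<close>
definition integrable_form :: "complex^'n \<Rightarrow> ('n \<Rightarrow> complex^'n \<Rightarrow> complex) \<Rightarrow> bool" where
  "integrable_form x \<omega> \<longleftrightarrow> (\<forall>\<^sub>F z in nhds x. \<forall>i j k.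
      \<omega> i z * (cpd (\<omega> k) j z - cpd (\<omega> j) k z)
    + \<omega> j z * (cpd (\<omega> i) k z - cpd (\<omega> k) i z)
    + \<omega> k z * (cpd (\<omega> j) i z - cpd (\<omega> i) j z) = 0)"

text \<open>omega = sum_i omega_i dz_i is a local defining form of a codimension-1 foliation at x\<close>
definition foliation_form :: "complex^'n \<Rightarrow> ('n \<Rightarrow> complex^'n \<Rightarrow> complex) \<Rightarrow> bool" where
  "foliation_form x \<omega> \<longleftrightarrow> (\<forall>i. hol_germ x (\<omega> i)) \<and> coprime_germs x \<omega> \<and> integrable_form x \<omega>"

definition tangent_values :: "complex^'n \<Rightarrow> ('n \<Rightarrow> complex^'n \<Rightarrow> complex) \<Rightarrow> (complex^'n) set" where
  "tangent_values x \<omega> = {V x | V. (\<forall>i. hol_germ x (\<lambda>z. V z $ i)) \<and>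
        (\<forall>\<^sub>F z in nhds x. (\<Sum>i\<in>UNIV. \<omega> i z * V z $ i) = 0)}"

definition dim_type :: "complex^'n \<Rightarrow> ('n \<Rightarrow> complex^'n \<Rightarrow> complex) \<Rightarrow> nat" where
  "dim_type x \<omega> = CARD('n) - vec.dim (tangent_values x \<omega>)"

text \<open>the hypersurface {h = 0} (h a reduced equation) is invariant: h divides omega wedge dh\<close>
definition invariant_hyp :: "complex^'n \<Rightarrow> ('n \<Rightarrow> complex^'n \<Rightarrow> complex) \<Rightarrow> (complex^'n \<Rightarrow> complex) \<Rightarrow> bool" where
  "invariant_hyp x \<omega> h \<longleftrightarrow>
     (\<forall>i j. germ_dvd x h (\<lambda>z. \<omega> i z * cpd h j z - \<omega> j z * cpd h i z))"

definition local_coords :: "complex^'n \<Rightarrow> (complex^'n) set \<Rightarrow> (complex^'n \<Rightarrow> complex^'n) \<Rightarrow> bool" where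
  "local_coords x U \<phi> \<longleftrightarrow> x \<in> U \<and> open U \<and> inj_on \<phi> U \<and> \<phi> x = 0 \<and>
     (\<forall>k. hol_on U (\<lambda>z. \<phi> z $ k)) \<and> open (\<phi> ` U) \<and>
     (\<exists>\<psi>. (\<forall>k. hol_on (\<phi> ` U) (\<lambda>w. \<psi> w $ k)) \<and> (\<forall>z\<in>U. \<psi> (\<phi> z) = z))"

end

theory Submission
  imports Defs "HOL-Complex_Analysis.Cauchy_Integral_Formula"
begin


definition hol_at :: "(complex^'n \<Rightarrow> complex) \<Rightarrow> complex^'n \<Rightarrow> complex^'n \<Rightarrow> bool" where
  "hol_at f c z \<longleftrightarrow> (f has_derivative (\<lambda>h. \<Sum>j\<in>UNIV. c $ j * h $ j)) (at z)"

lemma hol_on_iff: "hol_on U f \<longleftrightarrow> open U \<and> (\<forall>z\<in>U. \<exists>c. hol_at f c z)"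
  by (simp add: hol_on_def hol_at_def)

lemma hol_germ_iff: "hol_germ x f \<longleftrightarrow> (\<forall>\<^sub>F z in nhds x. \<exists>c. hol_at f c z)"
  unfolding hol_germ_def hol_on_iff eventually_nhds by blast

lemma hol_at_const: "hol_at (\<lambda>_. a) 0 z"
  by (simp add: hol_at_def)

lemma hol_at_add: "hol_at f c z \<Longrightarrow> hol_at g d z \<Longrightarrow> hol_at (\<lambda>y. f y + g y) (c + d) z"
  unfolding hol_at_def
  by (drule (1) has_derivative_add) (simp add: sum.distrib distrib_right)

lemma hol_at_mult: "hol_at f c z \<Longrightarrow> hol_at g d z \<Longrightarrow> hol_at (\<lambda>y. f y * g y) (f z *s d + g z *s c) z"
  unfolding hol_at_def
  apply (drule (1) has_derivative_mult)
  apply (erule has_derivative_eq_rhs)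
  by (auto simp: sum_distrib_left sum_distrib_right sum.distrib algebra_simps)

lemma hol_at_sum: "finite S \<Longrightarrow> (\<And>i. i \<in> S \<Longrightarrow> hol_at (f i) (c i) z) \<Longrightarrow> hol_at (\<lambda>y. \<Sum>i\<in>S. f i y) (\<Sum>i\<in>S. c i) z"
proof (induction S rule: finite_induct)
  case empty then show ?case using hol_at_const[of 0 z] by simp
next
  case (insert a S) then show ?case using hol_at_add[of "f a" "c a" z "\<lambda>y. \<Sum>i\<in>S. f i y"] by simp
qed

lemma hol_at_divide: "hol_at f c z \<Longrightarrow> hol_at g d z \<Longrightarrow> g z \<noteq> 0 \<Longrightarrow>
   hol_at (\<lambda>y. f y / g y) ((1 / g z) *s c - (f z / (g z * g z)) *s d) z"
  unfolding hol_at_def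
  apply (drule (2) has_derivative_divide'[where S=UNIV])
  apply (erule has_derivative_eq_rhs)
  by (auto simp: sum_divide_distrib sum_distrib_left sum_subtractf[symmetric] field_simps intro!: sum.cong)

lemma hol_at_cont: "hol_at f c z \<Longrightarrow> continuous (at z) f"
  unfolding hol_at_def using has_derivative_continuous by blast

lemma hol_germ_cont: "hol_germ x f \<Longrightarrow> continuous (at x) f"
proof -
  assume "hol_germ x f"
  then have "\<exists>c. hol_at f c x" unfolding hol_germ_iff by (rule eventually_nhds_x_imp_x)
  then show ?thesis using hol_at_cont by blast
qed



lemma axis_add_c: "axis k (a + b) = axis k a + (axis k b :: 'a::comm_monoid_add^'n)"
  by (simp add: vec_eq_iff axis_def)

lemma axis_zero[simp]: "axis k 0 = (0::'a::zero^'n)"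
  by (simp add: vec_eq_iff axis_def)

lemma norm_axis_c: "norm (axis k (s::complex) :: complex^'n) = norm s"
proof -
  have eq: "(\<lambda>j. (norm ((axis k s :: complex^'n) $ j))\<^sup>2) = (\<lambda>j. if j = k then (norm s)\<^sup>2 else 0)"
    by (auto simp: axis_def)
  have "(\<Sum>j\<in>UNIV. (norm ((axis k s :: complex^'n) $ j))\<^sup>2) = (norm s)\<^sup>2"
    unfolding eq by simp
  then show ?thesis unfolding norm_vec_def L2_set_def by simp
qed

lemma bounded_linear_axis_c: "bounded_linear (axis k :: complex \<Rightarrow> complex^'n)"
proof (rule bounded_linear_intro[where K=1])
  show "axis k (x + y) = (axis k x + axis k y :: complex^'n)" for x y by (rule axis_add_c)
  show "axis k (r *\<^sub>R x) = (r *\<^sub>R axis k x :: complex^'n)" for r x by (simp add: vec_eq_iff axis_def)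
  show "norm (axis k x :: complex^'n) \<le> norm x * 1" for x by (simp add: norm_axis_c)
qed

lemma line_has_derivative: "((\<lambda>s. z + axis k s :: complex^'n) has_derivative axis k) (at t within S)"
  using bounded_linear.has_derivative[OF bounded_linear_axis_c has_derivative_ident, of k]
  by (auto intro!: derivative_eq_intros)

lemma continuous_on_line: "continuous_on S (\<lambda>s. z + axis k s :: complex^'n)"
  by (intro continuous_on_add continuous_on_const linear_continuous_on bounded_linear_axis_c)

lemma L1:
  fixes z :: "complex^'n"
  assumes "hol_at f c z"
  shows "((\<lambda>s. f (z + axis k s)) has_field_derivative c $ k) (at 0)"
proof -
  have "((\<lambda>s. f (z + axis k s)) has_derivative (\<lambda>s. \<Sum>j\<in>UNIV. c $ j * axis k s $ j)) (at 0)"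
  proof -
    have "(f has_derivative (\<lambda>h. \<Sum>j\<in>UNIV. c $ j * h $ j)) (at (z + axis k 0))"
      using assms by (simp add: hol_at_def axis_zero)
    from has_derivative_compose[OF line_has_derivative this] show ?thesis .
  qed
  moreover have "(\<lambda>s. \<Sum>j\<in>UNIV. c $ j * (axis k s :: complex^'n) $ j) = (*) (c $ k)"
    by (auto simp: axis_def if_distrib cong: if_cong)
  ultimately show ?thesis by (simp add: has_field_derivative_def)
qed

definition pd :: "(complex^'n \<Rightarrow> complex) \<Rightarrow> 'n \<Rightarrow> complex^'n \<Rightarrow> complex" where
  "pd g k z = deriv (\<lambda>s. g (z + axis k s)) 0"

definition sep_hol :: "(complex^'n) set \<Rightarrow> (complex^'n \<Rightarrow> complex) \<Rightarrow> bool" where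
  "sep_hol U g \<longleftrightarrow> (\<forall>z\<in>U. \<forall>k. (\<lambda>s. g (z + axis k s)) field_differentiable (at 0))"

lemma hol_pd: "hol_at f c z \<Longrightarrow> pd f k z = c $ k"
  unfolding pd_def using L1 DERIV_imp_deriv by blast

lemma hol_sep_hol: "\<forall>z\<in>U. \<exists>c. hol_at f c z \<Longrightarrow> sep_hol U f"
  unfolding sep_hol_def field_differentiable_def using L1 by blast

lemma hol_cont: "\<forall>z\<in>U. \<exists>c. hol_at f c z \<Longrightarrow> continuous_on U f"
  using hol_at_cont continuous_at_imp_continuous_on by blast

lemma line_deriv:
  assumes "sep_hol U g" "z \<in> U"
  shows "((\<lambda>s. g (z + axis k s)) has_field_derivative pd g k z) (at 0)"
  using assms unfolding sep_hol_def pd_def using DERIV_deriv_iff_field_differentiable by blast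

lemma line_shift:
  assumes "sep_hol U g" "q + axis k t \<in> U"
  shows "((\<lambda>s. g (q + axis k s)) has_field_derivative pd g k (q + axis k t)) (at t)"
proof -
  have "((\<lambda>s. g (q + axis k t + axis k s)) has_field_derivative pd g k (q + axis k t)) (at 0)"
    by (rule line_deriv[OF assms])
  moreover have "(\<lambda>s. g (q + axis k t + axis k s)) = (\<lambda>s. (\<lambda>s. g (q + axis k s)) (s + t))"
    by (simp add: axis_add_c add_ac)
  ultimately show ?thesis using DERIV_shift[of "\<lambda>s. g (q + axis k s)" _ 0 t] by simp
qed

lemma CR:
  assumes cont: "continuous_on U g" and sh: "sep_hol U g" and sub: "cball w r \<subseteq> U" and r: "(r::real) > 0"
  shows "pd g k w = 1 / (2 * of_real pi * \<i>) * contour_integral (circlepath 0 r) (\<lambda>u. g (w + axis k u) / (u - 0)^2)"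
proof -
  define u where "u = (\<lambda>s. g (w + axis k s))"
  have img: "w + axis k s \<in> U" if "s \<in> cball 0 r" for s :: complex
    using that sub by (auto simp: dist_norm norm_axis_c)
  have cu: "continuous_on (cball 0 r) u"
    unfolding u_def by (rule continuous_on_compose2[OF cont continuous_on_line]) (use img in auto)
  have hu: "u holomorphic_on ball 0 r"
    unfolding holomorphic_on_def
  proof
    fix s :: complex assume "s \<in> ball 0 r"
    then have "w + axis k s \<in> U" using img by auto
    then have "(u has_field_derivative pd g k (w + axis k s)) (at s)"
      unfolding u_def by (rule line_shift[OF sh])
    then show "u field_differentiable at s within ball 0 r"
      using field_differentiable_at_within field_differentiable_def by blast
  qed
  have d: "(u has_field_derivative (1 / (2 * of_real pi * \<i>) * contour_integral (circlepath 0 r) (\<lambda>v. u v / (v - 0)^2))) (at 0)"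
    by (rule Cauchy_derivative_integral_circlepath(2)[OF cu hu]) (use r in simp)
  have "pd g k w = deriv u 0" by (simp add: pd_def u_def)
  also have "\<dots> = 1 / (2 * of_real pi * \<i>) * contour_integral (circlepath 0 r) (\<lambda>v. u v / (v - 0)^2)"
    by (rule DERIV_imp_deriv[OF d])
  finally show ?thesis unfolding u_def .
qed



definition Ker :: "real \<Rightarrow> real \<Rightarrow> complex" where
  "Ker r \<theta> = vector_derivative (circlepath 0 r) (at \<theta>) / (circlepath 0 r \<theta> - 0)^2"

lemma circ_eq: "circlepath 0 r \<theta> = of_real r * exp (\<i> * of_real (2 * pi * \<theta>))"
  by (simp add: circlepath_def part_circlepath_def linepath_def mult_ac)

lemma Ker_eq: "Ker r \<theta> = (2 * pi * \<i> * r * exp (2 * of_real pi * \<i> * \<theta>)) / (of_real r * exp (\<i> * of_real (2 * pi * \<theta>)))^2"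
  unfolding Ker_def vector_derivative_circlepath circ_eq by simp

lemma Ker_cont: "r > 0 \<Longrightarrow> continuous_on S (Ker r)"
  unfolding Ker_eq
  by (intro continuous_intros) auto

lemma circ_cont: "continuous_on S (circlepath 0 r)"
  unfolding circ_eq by (intro continuous_intros)

lemma norm_circ: "r \<ge> 0 \<Longrightarrow> norm (circlepath 0 r \<theta>) = r"
  unfolding circ_eq by (simp add: norm_mult)

lemma CR':
  assumes cont: "continuous_on U g" and sh: "sep_hol U g" and sub: "cball w r \<subseteq> U" and r: "(r::real) > 0"
  shows "pd g k w = 1 / (2 * of_real pi * \<i>) * integral {0..1} (\<lambda>\<theta>. g (w + axis k (circlepath 0 r \<theta>)) * Ker r \<theta>)"
  unfolding CR[OF assms] contour_integral_integral Ker_def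
  by (simp add: algebra_simps)

lemma PC:
  assumes U: "open U" and cont: "continuous_on U g" and sh: "sep_hol U g"
  shows "continuous_on U (pd g k)"
proof (rule continuous_at_imp_continuous_on, rule ballI)
  fix w assume "w \<in> U"
  then obtain e where e: "e > 0" "cball w e \<subseteq> U" using U open_contains_cball by blast
  define r where "r = e / 2"
  have r: "r > 0" and sub: "cball w (2*r) \<subseteq> U" using e by (auto simp: r_def)
  define F where "F w' = 1 / (2 * of_real pi * \<i>) * integral {0..1} (\<lambda>\<theta>. g (w' + axis k (circlepath 0 r \<theta>)) * Ker r \<theta>)" for w'
  have eq: "pd g k w' = F w'" if "w' \<in> ball w r" for w'
  proof -
    have "cball w' r \<subseteq> U"
    proof
      fix y assume "y \<in> cball w' r"
      then have "dist w y \<le> 2*r" using that dist_triangle[of w y w'] by auto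
      then show "y \<in> U" using sub by auto
    qed
    then show ?thesis unfolding F_def by (rule CR'[OF cont sh _ r])
  qed
  have pt: "fst p + axis k (circlepath 0 r (snd p)) \<in> U" if "p \<in> ball w r \<times> cbox 0 1" for p
  proof -
    have "dist w (fst p + axis k (circlepath 0 r (snd p))) \<le> dist w (fst p) + norm (axis k (circlepath 0 r (snd p)) :: complex^_)"
      by (metis dist_norm dist_triangle2 add_diff_cancel_left' norm_minus_commute)
    also have "\<dots> < 2 * r" using that r by (auto simp: norm_axis_c norm_circ)
    finally show ?thesis using sub by auto
  qed
  have jc: "continuous_on (ball w r \<times> cbox 0 1) (\<lambda>(w', \<theta>). g (w' + axis k (circlepath 0 r \<theta>)) * Ker r \<theta>)"
    unfolding case_prod_unfold
  proof (intro continuous_on_mult)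
    show "continuous_on (ball w r \<times> cbox 0 1) (\<lambda>p. g (fst p + axis k (circlepath 0 r (snd p))))"
    proof (rule continuous_on_compose2[OF cont])
      show "continuous_on (ball w r \<times> cbox 0 1) (\<lambda>p. fst p + axis k (circlepath 0 r (snd p)))"
        by (intro continuous_on_add continuous_on_fst continuous_on_id
            continuous_on_compose2[OF linear_continuous_on[OF bounded_linear_axis_c] continuous_on_compose2[OF circ_cont continuous_on_snd]]) auto
      show "(\<lambda>p. fst p + axis k (circlepath 0 r (snd p))) ` (ball w r \<times> cbox 0 1) \<subseteq> U"
        using pt by blast
    qed
    show "continuous_on (ball w r \<times> cbox 0 1) (\<lambda>p. Ker r (snd p))"
      by (rule continuous_on_compose2[OF Ker_cont[OF r] continuous_on_snd]) auto
  qed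
  have "continuous_on (ball w r) F"
    unfolding F_def
    using integral_continuous_on_param[OF jc] by (intro continuous_intros) (simp add: cbox_interval)
  then have "continuous_on (ball w r) (pd g k)"
    using eq continuous_on_cong by blast
  then show "isCont (pd g k) w" using continuous_on_interior r by fastforce
qed



definition pr :: "'n set \<Rightarrow> complex^'n \<Rightarrow> complex^'n" where
  "pr S h = (\<chi> j. if j \<in> S then h $ j else 0)"

lemma ab_lemma: "(a::complex) - b - (c + s) = (a - q - c) + (q - b - s)"
  by simp

lemma OS:
  fixes g :: "complex^'n \<Rightarrow> complex"
  assumes U: "open U" and sh: "sep_hol U g" and pc: "\<And>k. continuous_on U (pd g k)" and z: "z \<in> U"
  shows "hol_at g (\<chi> k. pd g k z) z"
  unfolding hol_at_def has_derivative_at_alt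
proof (intro conjI allI impI)
  show "bounded_linear (\<lambda>h. \<Sum>j\<in>UNIV. (\<chi> k. pd g k z) $ j * h $ j)"
    by (intro bounded_linear_sum bounded_linear_compose[OF bounded_linear_mult_right] bounded_linear_vec_nth)
  fix e :: real assume e: "e > 0"
  define N where "N = real CARD('n)"
  have N: "N \<ge> 1" unfolding N_def by (simp add: Suc_le_eq)
  define \<epsilon> where "\<epsilon> = e / N"
  have \<epsilon>: "\<epsilon> > 0" using e N by (simp add: \<epsilon>_def)
  have "\<forall>\<^sub>F y in nhds z. dist (pd g k y) (pd g k z) < \<epsilon>" for k
  proof -
    have "isCont (pd g k) z" using pc[of k] U z continuous_on_eq_continuous_at by blast
    then obtain d where "d > 0" "\<forall>y. dist y z < d \<longrightarrow> dist (pd g k y) (pd g k z) < \<epsilon>"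
      using \<epsilon> unfolding continuous_at_eps_delta by blast
    then show ?thesis unfolding eventually_nhds_metric by blast
  qed
  then have "\<forall>\<^sub>F y in nhds z. \<forall>k. dist (pd g k y) (pd g k z) < \<epsilon>"
    by (rule eventually_all_finite)
  moreover have "\<forall>\<^sub>F y in nhds z. y \<in> U" using eventually_nhds_in_open[OF U z] .
  ultimately have "\<forall>\<^sub>F y in nhds z. y \<in> U \<and> (\<forall>k. dist (pd g k y) (pd g k z) < \<epsilon>)"
    by (rule eventually_conj[rotated])
  then obtain d where d: "d > 0" and key: "\<And>y. dist y z < d \<Longrightarrow> y \<in> U \<and> (\<forall>k. dist (pd g k y) (pd g k z) < \<epsilon>)"
    unfolding eventually_nhds_metric by blast
  show "\<exists>d>0. \<forall>y. norm (y - z) < d \<longrightarrow> norm (g y - g z - (\<Sum>j\<in>UNIV. (\<chi> k. pd g k z) $ j * (y - z) $ j)) \<le> e * norm (y - z)"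
  proof (intro exI conjI allI impI)
    show "d > 0" by (rule d)
    fix y assume y: "norm (y - z) < d"
    define h where "h = y - z"
    have ind: "norm (g (z + pr S h) - g z - (\<Sum>k\<in>S. pd g k z * h $ k)) \<le> \<epsilon> * (\<Sum>k\<in>S. norm (h $ k))"
      if "finite S" for S
      using that
    proof (induction S rule: finite_induct)
      case empty
      have "pr {} h = 0" by (simp add: pr_def vec_eq_iff)
      then show ?case by simp
    next
      case (insert a S)
      define q where "q = z + pr S h"
      have prins: "pr (insert a S) h = pr S h + axis a (h $ a)"
        using insert(2) by (auto simp: pr_def vec_eq_iff axis_def)
      have seg: "closed_segment 0 (h $ a) \<subseteq> cball 0 (norm (h $ a))"
        by (rule closed_segment_subset) auto
      have inball: "dist (q + axis a t) z < d" if "t \<in> closed_segment 0 (h $ a)" for t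
      proof -
        have "norm (pr S h + axis a t) \<le> norm h"
        proof (rule norm_le_componentwise_cart)
          fix j
          show "norm ((pr S h + axis a t) $ j) \<le> norm (h $ j)"
            using seg that insert(2) by (auto simp: pr_def axis_def)
        qed
        then show ?thesis using y by (simp add: q_def dist_norm h_def)
      qed
      define u where "u t = g (q + axis a t) - pd g a z * t" for t
      have du: "(u has_field_derivative (pd g a (q + axis a t) - pd g a z)) (at t within closed_segment 0 (h $ a))"
        if "t \<in> closed_segment 0 (h $ a)" for t
      proof -
        have "q + axis a t \<in> U" using key inball[OF that] by blast
        from line_shift[OF sh this] have "((\<lambda>s. g (q + axis a s)) has_field_derivative pd g a (q + axis a t)) (at t)" .
        then have "(u has_field_derivative (pd g a (q + axis a t) - pd g a z)) (at t)"
          unfolding u_def by (auto intro!: derivative_eq_intros)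
        then show ?thesis by (rule has_field_derivative_at_within)
      qed
      have bnd: "norm (pd g a (q + axis a t) - pd g a z) \<le> \<epsilon>" if "t \<in> closed_segment 0 (h $ a)" for t
        using key[OF inball[OF that]] by (auto simp: dist_norm less_imp_le)
      have "norm (u (h $ a) - u 0) \<le> \<epsilon> * norm (h $ a - 0)"
        by (rule field_differentiable_bound[OF convex_closed_segment du bnd]) auto
      moreover have "u (h $ a) - u 0 = g (z + pr (insert a S) h) - g q - pd g a z * h $ a"
        unfolding u_def prins q_def by (simp add: add.assoc)
      ultimately have A: "norm (g (z + pr (insert a S) h) - g q - pd g a z * h $ a) \<le> \<epsilon> * norm (h $ a)"
        by simp
      have eqX: "g (z + pr (insert a S) h) - g z - (\<Sum>k\<in>insert a S. pd g k z * h $ k)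
          = (g (z + pr (insert a S) h) - g q - pd g a z * h $ a) + (g q - g z - (\<Sum>k\<in>S. pd g k z * h $ k))"
        by (subst sum.insert[OF insert(1,2)]) (rule ab_lemma)
      have "norm (g (z + pr (insert a S) h) - g z - (\<Sum>k\<in>insert a S. pd g k z * h $ k))
          \<le> norm (g (z + pr (insert a S) h) - g q - pd g a z * h $ a) + norm (g q - g z - (\<Sum>k\<in>S. pd g k z * h $ k))"
        unfolding eqX by (rule norm_triangle_ineq)
      also have "\<dots> \<le> \<epsilon> * norm (h $ a) + \<epsilon> * (\<Sum>k\<in>S. norm (h $ k))"
        using add_mono[OF A insert(3)[folded q_def]] .
      also have "\<dots> = \<epsilon> * (\<Sum>k\<in>insert a S. norm (h $ k))"
        using insert(1,2) by (simp add: distrib_left)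
      finally show ?case .
    qed
    have "pr UNIV h = h" by (simp add: pr_def vec_eq_iff)
    then have "norm (g y - g z - (\<Sum>k\<in>UNIV. pd g k z * h $ k)) \<le> \<epsilon> * (\<Sum>k\<in>UNIV. norm (h $ k))"
      using ind[of UNIV] by (simp add: h_def)
    also have "\<dots> \<le> \<epsilon> * (\<Sum>k\<in>(UNIV::'n set). norm h)"
      using \<epsilon> by (intro mult_left_mono sum_mono) (auto simp: Finite_Cartesian_Product.norm_nth_le)
    also have "\<dots> = e * norm h" using N by (simp add: \<epsilon>_def N_def)
    finally show "norm (g y - g z - (\<Sum>j\<in>UNIV. (\<chi> k. pd g k z) $ j * (y - z) $ j)) \<le> e * norm (y - z)"
      by (simp add: h_def)
  qed
qed



lemma jc2:
  fixes F :: "complex^'n \<Rightarrow> complex"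
  assumes cont: "continuous_on U F" and pt: "\<And>t \<theta>. t \<in> T \<Longrightarrow> w + axis k t + axis b (circlepath 0 r \<theta>) \<in> U"
    and r: "r > 0"
  shows "continuous_on (T \<times> S) (\<lambda>(t, \<theta>). F (w + axis k t + axis b (circlepath 0 r \<theta>)) * Ker r \<theta>)"
  unfolding case_prod_unfold
proof (intro continuous_on_mult)
  show "continuous_on (T \<times> S) (\<lambda>p. F (w + axis k (fst p) + axis b (circlepath 0 r (snd p))))"
  proof (rule continuous_on_compose2[OF cont])
    show "continuous_on (T \<times> S) (\<lambda>p. w + axis k (fst p) + axis b (circlepath 0 r (snd p)))"
      by (intro continuous_on_add continuous_on_const
          continuous_on_compose2[OF linear_continuous_on[OF bounded_linear_axis_c] continuous_on_fst]
          continuous_on_compose2[OF linear_continuous_on[OF bounded_linear_axis_c] continuous_on_compose2[OF circ_cont continuous_on_snd]]) auto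
    show "(\<lambda>p. w + axis k (fst p) + axis b (circlepath 0 r (snd p))) ` (T \<times> S) \<subseteq> U"
      using pt by auto
  qed
  show "continuous_on (T \<times> S) (\<lambda>p. Ker r (snd p))"
    by (rule continuous_on_compose2[OF Ker_cont[OF r] continuous_on_snd]) auto
qed

lemma PH:
  fixes f :: "complex^'n \<Rightarrow> complex"
  assumes U: "open U" and hf: "\<forall>z\<in>U. \<exists>c. hol_at f c z"
  shows "sep_hol U (pd f b)"
  unfolding sep_hol_def
proof (intro ballI allI)
  fix w k assume "w \<in> U"
  have cf: "continuous_on U f" using hf by (rule hol_cont)
  have shf: "sep_hol U f" using hf by (rule hol_sep_hol)
  have pcf: "continuous_on U (pd f j)" for j by (rule PC[OF U cf shf])
  obtain e where e: "e > 0" "cball w e \<subseteq> U" using U \<open>w \<in> U\<close> open_contains_cball by blast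
  define r where "r = e / 2"
  have r: "r > 0" and sub: "cball w (2*r) \<subseteq> U" using e by (auto simp: r_def)
  define G where "G t \<theta> = f (w + axis k t + axis b (circlepath 0 r \<theta>)) * Ker r \<theta>" for t \<theta>
  define Fx where "Fx t \<theta> = pd f k (w + axis k t + axis b (circlepath 0 r \<theta>)) * Ker r \<theta>" for t \<theta>
  have ptU: "w + axis k t + axis b (circlepath 0 r \<theta>) \<in> U" if "t \<in> ball 0 r" for t \<theta>
  proof -
    have "dist w (w + axis k t + axis b (circlepath 0 r \<theta>)) \<le> norm (axis k t :: complex^'n) + norm (axis b (circlepath 0 r \<theta>) :: complex^'n)"
    proof -
      have "dist w (w + axis k t + axis b (circlepath 0 r \<theta>)) = norm (axis k t + axis b (circlepath 0 r \<theta>) :: complex^'n)"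
      proof -
        have "w - (w + axis k t + axis b (circlepath 0 r \<theta>)) = - (axis k t + axis b (circlepath 0 r \<theta>) :: complex^'n)"
          by (simp add: algebra_simps)
        then show ?thesis by (simp only: dist_norm norm_minus_cancel)
      qed
      then show ?thesis by (simp add: norm_triangle_ineq)
    qed
    also have "\<dots> < 2 * r" using that r by (simp add: norm_axis_c norm_circ)
    finally show ?thesis using sub by auto
  qed
  have eq: "pd f b (w + axis k t) = 1 / (2 * of_real pi * \<i>) * integral {0..1} (G t)" if "t \<in> ball 0 r" for t
  proof -
    have "cball (w + axis k t) r \<subseteq> U"
    proof
      fix y assume "y \<in> cball (w + axis k t) r"
      have "dist w y \<le> dist w (w + axis k t) + dist (w + axis k t) y" by (rule dist_triangle)
      also have "\<dots> \<le> 2 * r" using that \<open>y \<in> cball (w + axis k t) r\<close> by (simp add: dist_norm norm_axis_c)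
      finally show "y \<in> U" using sub by auto
    qed
    then show ?thesis unfolding G_def by (rule CR'[OF cf shf _ r])
  qed
  have "(\<lambda>t. integral (cbox 0 1) (G t)) holomorphic_on ball 0 r"
  proof (rule leibniz_rule_holomorphic[where fx = Fx])
    fix t :: complex and \<theta> :: real assume t: "t \<in> ball 0 r" and "\<theta> \<in> cbox (0::real) 1"
    define q where "q = w + axis b (circlepath 0 r \<theta>)"
    have "q + axis k t \<in> U" using ptU[OF t, of \<theta>] by (simp add: q_def add_ac)
    from line_shift[OF shf this] have D: "((\<lambda>s. f (q + axis k s)) has_field_derivative pd f k (q + axis k t)) (at t)" .
    have e1: "(\<lambda>s. f (q + axis k s)) = (\<lambda>s. f (w + axis k s + axis b (circlepath 0 r \<theta>)))"
      by (simp add: q_def add_ac)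
    have e2: "q + axis k t = w + axis k t + axis b (circlepath 0 r \<theta>)" by (simp add: q_def add_ac)
    have "((\<lambda>s. f (w + axis k s + axis b (circlepath 0 r \<theta>))) has_field_derivative pd f k (w + axis k t + axis b (circlepath 0 r \<theta>))) (at t)"
      using D unfolding e1 e2 .
    then show "((\<lambda>t. G t \<theta>) has_field_derivative Fx t \<theta>) (at t within ball 0 r)"
      unfolding G_def Fx_def by (rule has_field_derivative_at_within[OF DERIV_cmult_right])
  next
    fix t :: complex assume t: "t \<in> ball 0 r"
    have c1: "continuous_on (cbox 0 1) (\<lambda>\<theta>. w + axis k t + axis b (circlepath 0 r \<theta>))"
      by (intro continuous_on_add continuous_on_const
          continuous_on_compose2[OF linear_continuous_on[OF bounded_linear_axis_c] circ_cont]) auto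
    have c2: "continuous_on (cbox 0 1) (\<lambda>\<theta>. f (w + axis k t + axis b (circlepath 0 r \<theta>)))"
      by (rule continuous_on_compose2[OF cf c1]) (use ptU[OF t] in blast)
    have "continuous_on (cbox 0 1) (G t)"
      unfolding G_def by (rule continuous_on_mult[OF c2 Ker_cont[OF r]])
    then show "G t integrable_on cbox 0 1" by (rule integrable_continuous)
  next
    show "continuous_on (ball 0 r \<times> cbox 0 1) (\<lambda>(t, \<theta>). Fx t \<theta>)"
      unfolding Fx_def by (rule jc2[OF pcf ptU r])
  next
    show "convex (ball (0::complex) r)" by simp
  qed
  then have "(\<lambda>t. integral {0..1} (G t)) holomorphic_on ball 0 r" by (simp add: cbox_interval)
  then have "(\<lambda>t. 1 / (2 * of_real pi * \<i>) * integral {0..1} (G t)) holomorphic_on ball 0 r"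
    by (rule holomorphic_on_mult[OF holomorphic_on_const])
  then have "(\<lambda>t. pd f b (w + axis k t)) holomorphic_on ball 0 r"
    by (rule holomorphic_transform) (simp add: eq)
  then show "(\<lambda>s. pd f b (w + axis k s)) field_differentiable (at 0)"
    by (rule holomorphic_on_imp_differentiable_at) (use r in auto)
qed

lemma DH:
  fixes f :: "complex^'n \<Rightarrow> complex"
  assumes U: "open U" and hf: "\<forall>z\<in>U. \<exists>c. hol_at f c z"
  shows "\<forall>z\<in>U. \<exists>c. hol_at (pd f b) c z"
proof
  fix z assume z: "z \<in> U"
  have cf: "continuous_on U f" using hf by (rule hol_cont)
  have shf: "sep_hol U f" using hf by (rule hol_sep_hol)
  have c1: "continuous_on U (pd f b)" by (rule PC[OF U cf shf])
  have s1: "sep_hol U (pd f b)" by (rule PH[OF U hf])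
  show "\<exists>c. hol_at (pd f b) c z"
    using OS[OF U s1 PC[OF U c1 s1] z] by blast
qed

lemma cpd_eq: "hol_at f c z \<Longrightarrow> cpd f j z = c $ j"
proof -
  assume "hol_at f c z"
  then have "frechet_derivative f (at z) = (\<lambda>h. \<Sum>i\<in>UNIV. c $ i * h $ i)"
    unfolding hol_at_def by (metis frechet_derivative_at)
  then show ?thesis unfolding cpd_def by (simp add: axis_def if_distrib cong: if_cong)
qed

lemma hol_on_cpd:
  assumes "hol_on U f"
  shows "hol_on U (cpd f j)"
proof -
  have U: "open U" and hf: "\<forall>z\<in>U. \<exists>c. hol_at f c z" using assms by (auto simp: hol_on_iff)
  have hd: "\<forall>z\<in>U. \<exists>c. hol_at (pd f j) c z" by (rule DH[OF U hf])
  have eqf: "pd f j y = cpd f j y" if "y \<in> U" for y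
    using hf that hol_pd cpd_eq by metis
  show ?thesis unfolding hol_on_iff
  proof (intro conjI ballI U)
    fix z assume z: "z \<in> U"
    then obtain c where "hol_at (pd f j) c z" using hd by blast
    then have "hol_at (cpd f j) c z"
      unfolding hol_at_def using has_derivative_transform_within_open[of "pd f j" _ z UNIV U "cpd f j"] eqf U z by blast
    then show "\<exists>c. hol_at (cpd f j) c z" by blast
  qed
qed



lemma hol_germ_const: "hol_germ x (\<lambda>_. a)"
  unfolding hol_germ_iff using hol_at_const by (auto intro: always_eventually)

lemma hol_germ_mult: "hol_germ x f \<Longrightarrow> hol_germ x g \<Longrightarrow> hol_germ x (\<lambda>z. f z * g z)"
  unfolding hol_germ_iff
proof -
  assume a: "\<forall>\<^sub>F z in nhds x. \<exists>c. hol_at f c z" and b: "\<forall>\<^sub>F z in nhds x. \<exists>c. hol_at g c z"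
  show "\<forall>\<^sub>F z in nhds x. \<exists>c. hol_at (\<lambda>z. f z * g z) c z"
    using eventually_conj[OF a b] by (rule eventually_mono) (auto intro: hol_at_mult)
qed

lemma hol_germ_sum:
  fixes f :: "'i::finite \<Rightarrow> complex^'n \<Rightarrow> complex"
  assumes "\<And>i. hol_germ x (f i)"
  shows "hol_germ x (\<lambda>z. \<Sum>i\<in>UNIV. f i z)"
proof -
  have "\<forall>\<^sub>F z in nhds x. \<forall>i. \<exists>c. hol_at (f i) c z"
    using assms unfolding hol_germ_iff by (intro eventually_all_finite) auto
  then show ?thesis unfolding hol_germ_iff
  proof (rule eventually_mono)
    fix z assume "\<forall>i. \<exists>c. hol_at (f i) c z"
    then obtain c where "\<And>i. hol_at (f i) (c i) z" by metis
    then show "\<exists>c. hol_at (\<lambda>z. \<Sum>i\<in>UNIV. f i z) c z" using hol_at_sum[of UNIV f c z] by auto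
  qed
qed

lemma germ_ev_ne:
  assumes "hol_germ x g" "g x \<noteq> 0"
  shows "\<forall>\<^sub>F z in nhds x. g z \<noteq> 0"
proof -
  have "(g \<longlongrightarrow> g x) (at x)" using hol_germ_cont[OF assms(1)] by (simp add: isCont_def)
  then have "\<forall>\<^sub>F z in at x. g z \<noteq> 0" using assms(2) tendsto_imp_eventually_ne by blast
  then have "\<forall>\<^sub>F z in nhds x. z \<noteq> x \<longrightarrow> z \<in> UNIV \<longrightarrow> g z \<noteq> 0" unfolding eventually_at_filter .
  then show ?thesis by (rule eventually_mono) (use assms(2) in auto)
qed

lemma hol_germ_divide:
  assumes "hol_germ x f" "hol_germ x g" "g x \<noteq> 0"
  shows "hol_germ x (\<lambda>z. f z / g z)"
proof -
  have "\<forall>\<^sub>F z in nhds x. (\<exists>c. hol_at f c z) \<and> (\<exists>c. hol_at g c z) \<and> g z \<noteq> 0"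
    using assms germ_ev_ne[OF assms(2,3)] unfolding hol_germ_iff by (auto intro: eventually_conj)
  then show ?thesis unfolding hol_germ_iff
    by (rule eventually_mono) (auto intro: hol_at_divide)
qed

lemma vec_has_derivative:
  fixes f :: "'a::real_normed_vector \<Rightarrow> complex^'n"
  assumes L: "bounded_linear L" and d: "\<And>k. ((\<lambda>z. f z $ k) has_derivative (\<lambda>h. L h $ k)) (at x)"
  shows "(f has_derivative L) (at x)"
  unfolding has_derivative_within
proof (intro conjI L vec_tendstoI)
  fix i
  have "((\<lambda>y. (1 / norm (y - x)) *\<^sub>R (f y $ i - (f x $ i + L (y - x) $ i))) \<longlongrightarrow> 0) (at x)"
    using d[of i] unfolding has_derivative_within by blast
  then show "((\<lambda>y. ((1 / norm (y - x)) *\<^sub>R (f y - (f x + L (y - x)))) $ i) \<longlongrightarrow> 0 $ i) (at x)"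
    by simp
qed



theorem mainTheorem17:
  fixes x :: "complex^'n"
    and \<omega> :: "'n \<Rightarrow> complex^'n \<Rightarrow> complex"
    and E U :: "(complex^'n) set"
    and \<phi> :: "complex^'n \<Rightarrow> complex^'n"
    and I :: "'n set"
  assumes "foliation_form x \<omega>"
    and "local_coords x U \<phi>"
    and "E \<inter> U = {z \<in> U. \<exists>i\<in>I. \<phi> z $ i = 0}"
    and "\<forall>i\<in>I. invariant_hyp x \<omega> (\<lambda>z. \<phi> z $ i)"
  shows "card I \<le> dim_type x \<omega>"
proof -
  have cop: "coprime_germs x \<omega>" using assms(1) unfolding foliation_form_def by auto
  have xU: "x \<in> U" and U: "open U" and phi0: "\<phi> x = 0" and hphi: "\<And>k. hol_on U (\<lambda>z. \<phi> z $ k)"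
    and "\<exists>\<psi>. (\<forall>k. hol_on (\<phi> ` U) (\<lambda>w. \<psi> w $ k)) \<and> (\<forall>z\<in>U. \<psi> (\<phi> z) = z)"
    using assms(2) unfolding local_coords_def by auto
  then obtain \<psi> where hpsi: "\<And>k. hol_on (\<phi> ` U) (\<lambda>w. \<psi> w $ k)" and inv: "\<And>z. z \<in> U \<Longrightarrow> \<psi> (\<phi> z) = z"
    by blast
  have "\<forall>k. \<exists>c. hol_at (\<lambda>z. \<phi> z $ k) c x" using hphi xU hol_on_iff by blast
  then obtain a where ha: "\<And>k. hol_at (\<lambda>z. \<phi> z $ k) (a k) x" by metis
  define A :: "complex^'n^'n" where "A = (\<chi> k. a k)"
  have "0 \<in> \<phi> ` U" using xU phi0 by force
  then have "\<forall>m. \<exists>c. hol_at (\<lambda>w. \<psi> w $ m) c 0" using hpsi hol_on_iff by blast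
  then obtain b where hb: "\<And>m. hol_at (\<lambda>w. \<psi> w $ m) (b m) 0" by metis
  define B :: "complex^'n^'n" where "B = (\<chi> m. b m)"
  have dphi: "(\<phi> has_derivative (\<lambda>h. A *v h)) (at x)"
  proof (rule vec_has_derivative)
    show "bounded_linear ((*v) A)" by (rule matrix_vector_mul_bounded_linear)
    fix k
    show "((\<lambda>z. \<phi> z $ k) has_derivative (\<lambda>h. (A *v h) $ k)) (at x)"
      using ha[of k] unfolding hol_at_def by (simp add: matrix_vector_mult_def A_def)
  qed
  have BA: "B *v (A *v v) = v" for v
  proof -
    have eqm: "(\<lambda>h. \<Sum>j\<in>UNIV. b m $ j * (A *v h) $ j) = (\<lambda>h. h $ m)" for m
    proof (rule has_derivative_unique)
      have "((\<lambda>w. \<psi> w $ m) has_derivative (\<lambda>h. \<Sum>j\<in>UNIV. b m $ j * h $ j)) (at (\<phi> x))"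
        using hb[of m] phi0 unfolding hol_at_def by simp
      from has_derivative_compose[OF dphi this]
      show "((\<lambda>z. \<psi> (\<phi> z) $ m) has_derivative (\<lambda>h. \<Sum>j\<in>UNIV. b m $ j * (A *v h) $ j)) (at x)" .
      have "((\<lambda>z. z $ m) has_derivative (\<lambda>h. h $ m)) (at x)"
        by (rule bounded_linear_imp_has_derivative) (rule bounded_linear_vec_nth)
      then show "((\<lambda>z. \<psi> (\<phi> z) $ m) has_derivative (\<lambda>h. h $ m)) (at x)"
        by (rule has_derivative_transform_within_open[OF _ U xU]) (simp add: inv)
    qed
    show ?thesis
    proof (subst vec_eq_iff, rule allI)
      fix m
      have "(B *v (A *v v)) $ m = (\<Sum>j\<in>UNIV. b m $ j * (A *v v) $ j)"
        by (simp add: matrix_vector_mult_def B_def)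
      also have "\<dots> = v $ m" using fun_cong[OF eqm[of m], of v] by simp
      finally show "(B *v (A *v v)) $ m = v $ m" .
    qed
  qed
  have key: "(A *v v) $ i = 0" if vT: "v \<in> tangent_values x \<omega>" and iI: "i \<in> I" for v i
  proof -
    obtain V where vV: "v = V x" and hV: "\<And>j. hol_germ x (\<lambda>z. V z $ j)"
      and hw: "\<forall>\<^sub>F z in nhds x. (\<Sum>j\<in>UNIV. \<omega> j z * V z $ j) = 0"
      using vT unfolding tangent_values_def by blast
    define h where "h = (\<lambda>z. \<phi> z $ i)"
    have hh: "hol_on U h" unfolding h_def by (rule hphi)
    have hgerm: "hol_germ x h" unfolding hol_germ_def using hh xU by blast
    have hx: "h x = 0" by (simp add: h_def phi0)
    show ?thesis
    proof (rule ccontr)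
      assume ne: "(A *v v) $ i \<noteq> 0"
      have "\<forall>p q. germ_dvd x h (\<lambda>z. \<omega> p z * cpd h q z - \<omega> q z * cpd h p z)"
        using assms(4) iI unfolding invariant_hyp_def h_def by blast
      then have "\<forall>p q. \<exists>c. hol_germ x c \<and> (\<forall>\<^sub>F z in nhds x. \<omega> p z * cpd h q z - \<omega> q z * cpd h p z = c z * h z)"
        unfolding germ_dvd_def by blast
      then obtain C where hC: "\<And>p q. hol_germ x (C p q)"
        and evC: "\<And>p q. \<forall>\<^sub>F z in nhds x. \<omega> p z * cpd h q z - \<omega> q z * cpd h p z = C p q z * h z"
        by metis
      have hcpd: "hol_germ x (cpd h q)" for q
        unfolding hol_germ_def using hol_on_cpd[OF hh] xU by blast
      define D where "D = (\<lambda>z. \<Sum>q\<in>UNIV. V z $ q * cpd h q z)"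
      have hD: "hol_germ x D" unfolding D_def
        by (intro hol_germ_sum hol_germ_mult hV hcpd)
      have "D x = (A *v v) $ i"
      proof -
        have "cpd h q x = a i $ q" for q using cpd_eq[OF ha[of i]] by (simp add: h_def)
        then show ?thesis by (simp add: D_def matrix_vector_mult_def A_def vV mult.commute)
      qed
      then have Dx: "D x \<noteq> 0" using ne by simp
      define G where "G p = (\<lambda>z. \<Sum>q\<in>UNIV. V z $ q * C p q z)" for p
      have hG: "hol_germ x (G p)" for p unfolding G_def
        by (intro hol_germ_sum hol_germ_mult hV hC)
      have evEq: "\<forall>\<^sub>F z in nhds x. \<omega> p z * D z = G p z * h z" for p
      proof -
        have "\<forall>\<^sub>F z in nhds x. \<forall>q. \<omega> p z * cpd h q z - \<omega> q z * cpd h p z = C p q z * h z"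
          by (intro eventually_all_finite evC)
        then show ?thesis using hw
        proof (eventually_elim)
          case (elim z)
          have "G p z * h z = (\<Sum>q\<in>UNIV. V z $ q * (C p q z * h z))"
            by (simp add: G_def sum_distrib_right mult.assoc)
          also have "\<dots> = (\<Sum>q\<in>UNIV. V z $ q * (\<omega> p z * cpd h q z - \<omega> q z * cpd h p z))"
            using elim(1) by simp
          also have "\<dots> = \<omega> p z * D z - cpd h p z * (\<Sum>q\<in>UNIV. \<omega> q z * V z $ q)"
            by (simp add: D_def sum_distrib_left right_diff_distrib sum_subtractf mult_ac)
          also have "\<dots> = \<omega> p z * D z" using elim(2) by simp
          finally show ?case by simp
        qed
      qed
      have "germ_dvd x h (\<omega> p)" for p
        unfolding germ_dvd_def
      proof (intro exI conjI)
        show "hol_germ x (\<lambda>z. G p z / D z)" by (rule hol_germ_divide[OF hG hD Dx])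
        show "\<forall>\<^sub>F z in nhds x. \<omega> p z = G p z / D z * h z"
          using evEq[of p] germ_ev_ne[OF hD Dx]
          by (rule eventually_elim2) (simp add: field_simps)
      qed
      then have "h x \<noteq> 0" using cop hgerm unfolding coprime_germs_def by blast
      then show False using hx by simp
    qed
  qed
  define W where "W = {w::complex^'n. \<forall>i\<in>I. w $ i = 0}"
  have sub: "tangent_values x \<omega> \<subseteq> (\<lambda>w. B *v w) ` W"
  proof
    fix v assume "v \<in> tangent_values x \<omega>"
    then have "A *v v \<in> W" using key by (auto simp: W_def)
    moreover have "v = B *v (A *v v)" by (simp add: BA)
    ultimately show "v \<in> (\<lambda>w. B *v w) ` W" by blast
  qed
  have d1: "vec.dim (tangent_values x \<omega>) \<le> vec.dim W"
    using vec.dim_subset[OF sub] vec.dim_image_le[OF matrix_vector_mul_linear_gen, of B W] by simp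
  have spanW: "W \<subseteq> vec.span ((\<lambda>j. axis j 1) ` (UNIV - I))"
  proof
    fix w assume w: "w \<in> W"
    have "w = (\<Sum>j\<in>UNIV - I. w $ j *s axis j 1)"
    proof (subst vec_eq_iff, rule allI)
      fix i
      have "(\<Sum>j\<in>UNIV - I. w $ j *s axis j (1::complex)) $ i = (\<Sum>j\<in>UNIV - I. w $ j * (if i = j then 1 else 0))"
        by (simp add: sum_component axis_def)
      also have "\<dots> = (if i \<in> UNIV - I then w $ i else 0)"
        by (simp add: if_distrib sum.delta cong: if_cong)
      also have "\<dots> = w $ i" using w by (auto simp: W_def)
      finally show "w $ i = (\<Sum>j\<in>UNIV - I. w $ j *s axis j 1) $ i" by simp
    qed
    also have "\<dots> \<in> vec.span ((\<lambda>j. axis j 1) ` (UNIV - I))"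
      by (intro vec.span_sum vec.span_scale vec.span_base) auto
    finally show "w \<in> vec.span ((\<lambda>j. axis j 1) ` (UNIV - I))" .
  qed
  have d2: "vec.dim W \<le> card (UNIV - I)"
    using vec.dim_le_card[OF spanW] card_image_le[of "UNIV - I" "\<lambda>j. axis j (1::complex)"] by simp
  have cI: "card (UNIV - I) = CARD('n) - card I" by (simp add: card_Diff_subset)
  have "card I \<le> CARD('n)" by (simp add: card_mono)
  then show ?thesis unfolding dim_type_def using d1 d2 cI by linarith
qed


end
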